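(* Let $\omega_1,\dots,\omega_n$ be non-zero real numbers, let $\tilde{\Delta} = \sum_{i=1}^n \omega_i \partial_{x_i}^2$, and let $k$ be a natural number. Let $q \in C^1(\mathbb{R}^n,\mathbb{R})$ be a scalar function such that there exists $m \le n$ with $q(\mathbf{x}) = f(x_m)\cdot \mathbf{x}_{i\neq m}^{\beta}$ for a multi-index $\beta \in \mathbb{N}_0^{n-1}$ and a function $f$ of the single variable $x_m$. Set $\lambda = \left\lceil \frac{|\beta|-1}{2}\right\rceil$ and $$W(\mathbf{x}) = \omega_m^{-\lambda-k}\, \mathcal{A}_{x_m}^{2\lambda+2k} q(\mathbf{x}) = \omega_m^{-\lambda-k}\, \mathbf{x}_{i\neq m}^{\beta}\, \mathcal{A}_{x_m}^{2\lambda+2k} f(x_m).$$ Then the function $$Q(\mathbf{x}) := \sum_{p=0}^{\lambda} (-1)^p \binom{k+p-1}{p} \omega_m^{\lambda-p}\, \partial_{x_m}^{2\lambda-2p}\, \tilde{\Delta}_{\setminus m}^{p} W(\mathbf{x}) = \sum_{p=0}^{\lambda} (-1)^p \binom{k+p-1}{p} \omega_m^{-p-k}\, \mathcal{A}_{x_m}^{2k+2p}\, \tilde{\Delta}_{\setminus m}^{p} q(\mathbf{x})$$ satisfies $\tilde{\Delta}^k Q = q$. In particular, for $k=1$, $$Q(\mathbf{x}) := \sum_{p=0}^{\lambda} (-1)^p \omega_m^{\lambda-p}\, \partial_{x_m}^{2\lambda-2p}\, \tilde{\Delta}_{\setminus m}^{p} W(\mathbf{x}) = \sum_{p=0}^{\lambda}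 (-1)^p \omega_m^{-p-1}\, \mathcal{A}_{x_m}^{2+2p}\, \tilde{\Delta}_{\setminus m}^{p} q(\mathbf{x})$$ satisfies $\tilde{\Delta} Q = q$.
   Context: $\mathbf{x}_{i\neq m}^{\beta}$ denotes the monomial $\prod_{i\neq m} x_i^{\beta_i}$ in the variables other than $x_m$, and $|\beta|$ is its total degree; $\lceil h\rceil$ is the least integer $\ge h$. The incomplete generalized Laplacian is $\tilde{\Delta}_{\setminus m} f := \sum_{i\neq m}\omega_i\partial_{x_i}^2 f$, with $\tilde{\Delta}_{\setminus m}^p$ its $p$-fold application. The antiderivative with respect to $x_j$ is $\mathcal{A}_{x_j} f(\mathbf{x}) := \int_{x_0}^{x_j} f(x_1,\dots,\xi_j,\dots,x_n)\, d\xi_j$ with a freely chosen lower limit $x_0$, and $\mathcal{A}_{x_j}^p := \mathcal{A}_{x_j}^{p-1}\mathcal{A}_{x_j}$, i.e. $\mathcal{A}_{x_j}^p f(\mathbf{x}) = \frac{1}{(p-1)!}\int_{x_0}^{x_j}(x_j-t_j)^{p-1} f(\dots,t_j,\dots)\,dt_j$. By convention all zeroth powers of these operators are the identity and $\partial_{x_j}^p\mathcal{A}_{x_j}^p f = f$. *)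

theory Defs
  imports "HOL-Analysis.Analysis"
begin

definition vupd :: "real ^ 'n \<Rightarrow> 'n \<Rightarrow> real \<Rightarrow> real ^ 'n" where
  "vupd x j t = (\<chi> i. if i = j then t else x $ i)"

definition pdiff :: "'n \<Rightarrow> (real ^ 'n \<Rightarrow> real) \<Rightarrow> real ^ 'n \<Rightarrow> real" where
  "pdiff j F x = deriv (\<lambda>t. F (vupd x j t)) (x $ j)"

definition glap :: "('n \<Rightarrow> real) \<Rightarrow> (real ^ 'n \<Rightarrow> real) \<Rightarrow> real ^ 'n \<Rightarrow> real" where
  "glap \<omega> F x = (\<Sum>i\<in>UNIV. \<omega> i * pdiff i (pdiff i F) x)"

definition glap_wo :: "('n \<Rightarrow> real) \<Rightarrow> 'n \<Rightarrow> (real ^ 'n \<Rightarrow> real) \<Rightarrow> real ^ 'n \<Rightarrow> real" where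
  "glap_wo \<omega> m F x = (\<Sum>i\<in>UNIV - {m}. \<omega> i * pdiff i (pdiff i F) x)"

definition oint :: "real \<Rightarrow> real \<Rightarrow> (real \<Rightarrow> real) \<Rightarrow> real" where
  "oint a b g = (if a \<le> b then integral {a..b} g else - integral {b..a} g)"

definition antideriv1 :: "real \<Rightarrow> (real \<Rightarrow> real) \<Rightarrow> real \<Rightarrow> real" where
  "antideriv1 x0 g t = oint x0 t g"

definition antideriv :: "'n \<Rightarrow> real \<Rightarrow> (real ^ 'n \<Rightarrow> real) \<Rightarrow> real ^ 'n \<Rightarrow> real" where
  "antideriv j x0 F x = oint x0 (x $ j) (\<lambda>s. F (vupd x j s))"

definition mono_wo :: "('n \<Rightarrow> nat) \<Rightarrow> 'n \<Rightarrow> real ^ 'n \<Rightarrow> real" where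
  "mono_wo \<beta> m x = (\<Prod>i\<in>UNIV - {m}. (x $ i) ^ \<beta> i)"

definition deg_wo :: "('n \<Rightarrow> nat) \<Rightarrow> 'n \<Rightarrow> nat" where
  "deg_wo \<beta> m = (\<Sum>i\<in>UNIV - {m}. \<beta> i)"

end

theory Submission imports Defs begin

lemma vupd_nth[simp]: "vupd x j t $ i = (if i = j then t else x $ i)"
  by (simp add: vupd_def)

lemma vupd_vupd[simp]: "vupd (vupd x j s) j t = vupd x j t"
  by (simp add: vupd_def vec_eq_iff)

lemma vupd_same[simp]: "vupd x j (x $ j) = x"
  by (simp add: vupd_def vec_eq_iff)

lemma oint_deriv:
  fixes g :: "real \<Rightarrow> real"
  assumes g: "continuous_on UNIV g"
  shows "((\<lambda>t. oint x0 t g) has_real_derivative g t) (at t)"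
proof -
  define a where "a = min x0 t - 1"
  define b where "b = max x0 t + 1"
  have cab: "continuous_on {a..b} g" using g continuous_on_subset by blast
  have "((\<lambda>x. integral {a..x} g) has_real_derivative g t) (at t within {a..b})"
    by (rule integral_has_real_derivative[OF cab]) (auto simp: a_def b_def)
  moreover have "t \<in> interior {a..b}" by (auto simp: a_def b_def)
  ultimately have d: "((\<lambda>x. integral {a..x} g) has_real_derivative g t) (at t)"
    using at_within_interior by metis
  have d2: "((\<lambda>x. integral {a..x} g - integral {a..x0} g) has_real_derivative g t) (at t)"
    using DERIV_diff[OF d DERIV_const[of "integral {a..x0} g"]] by simp
  show ?thesis
  proof (rule has_field_derivative_transform_within_open[OF d2, of "{a<..<b}"])
    show "open {a<..<b}" by simp
    show "t \<in> {a<..<b}" by (auto simp: a_def b_def)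
    fix s assume s: "s \<in> {a<..<b}"
    have ax: "a \<le> x0" "x0 \<le> b" by (auto simp: a_def b_def)
    have int: "g integrable_on {a..b}" using cab integrable_continuous_real by blast
    show "integral {a..s} g - integral {a..x0} g = oint x0 s g"
    proof (cases "x0 \<le> s")
      case True
      have "integral {a..s} g = integral {a..x0} g + integral {x0..s} g"
        using Henstock_Kurzweil_Integration.integral_combine[where a=a and c=x0 and b=s and f=g] ax s True integrable_continuous_real[OF continuous_on_subset[OF g, of "{a..s}"]] by auto
      then show ?thesis using True by (simp add: oint_def)
    next
      case False
      have "integral {a..x0} g = integral {a..s} g + integral {s..x0} g"
        using Henstock_Kurzweil_Integration.integral_combine[where a=a and c=s and b=x0 and f=g] ax s False integrable_continuous_real[OF continuous_on_subset[OF g, of "{a..x0}"]] by auto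
      then show ?thesis using False by (simp add: oint_def)
    qed
  qed
qed

lemma mono_indep[simp]: "mono_wo \<alpha> m (vupd x m t) = mono_wo \<alpha> m x"
  unfolding mono_wo_def by (rule prod.cong) auto

lemma mono_split:
  assumes "i \<noteq> m"
  shows "mono_wo \<alpha> m (vupd x i t) = t ^ \<alpha> i * (\<Prod>j\<in>UNIV - {m} - {i}. x $ j ^ \<alpha> j)"
proof -
  have "mono_wo \<alpha> m (vupd x i t) = (vupd x i t $ i) ^ \<alpha> i * (\<Prod>j\<in>UNIV - {m} - {i}. (vupd x i t $ j) ^ \<alpha> j)"
    unfolding mono_wo_def using assms by (subst prod.remove[of _ i]) auto
  also have "(\<Prod>j\<in>UNIV - {m} - {i}. (vupd x i t $ j) ^ \<alpha> j) = (\<Prod>j\<in>UNIV - {m} - {i}. x $ j ^ \<alpha> j)"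
    by (rule prod.cong) auto
  finally show ?thesis by simp
qed

lemma mono_deriv:
  assumes "i \<noteq> m"
  shows "((\<lambda>t. mono_wo \<alpha> m (vupd x i t)) has_real_derivative (real (\<alpha> i) * mono_wo (\<alpha>(i:=\<alpha> i - 1)) m x)) (at (x$i))"
proof -
  define R where "R = (\<Prod>j\<in>UNIV - {m} - {i}. x $ j ^ \<alpha> j)"
  have e1: "(\<lambda>t. mono_wo \<alpha> m (vupd x i t)) = (\<lambda>t. t ^ \<alpha> i * R)"
    using mono_split[OF assms] R_def by auto
  have "mono_wo (\<alpha>(i:=\<alpha> i - 1)) m x = mono_wo (\<alpha>(i:=\<alpha> i - 1)) m (vupd x i (x$i))" by simp
  also have "\<dots> = (x$i) ^ (\<alpha> i - 1) * R"
  proof -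
    have "(\<Prod>j\<in>UNIV - {m} - {i}. x $ j ^ (\<alpha>(i:=\<alpha> i - 1)) j) = (\<Prod>j\<in>UNIV - {m} - {i}. x $ j ^ \<alpha> j)"
      by (rule prod.cong) auto
    then show ?thesis unfolding mono_split[OF assms] R_def by simp
  qed
  finally have e2: "mono_wo (\<alpha>(i:=\<alpha> i - 1)) m x = (x$i) ^ (\<alpha> i - 1) * R" .
  have "((\<lambda>t. t ^ \<alpha> i * R) has_real_derivative (real (\<alpha> i) * (x$i) ^ (\<alpha> i - Suc 0)) * R) (at (x$i))"
    by (intro DERIV_cmult_right DERIV_pow)
  then show ?thesis unfolding e1 e2 by (simp add: mult.assoc)
qed

lemma pdiff_mono:
  assumes "i \<noteq> m"
  shows "pdiff i (mono_wo \<alpha> m) = (\<lambda>x. real (\<alpha> i) * mono_wo (\<alpha>(i:=\<alpha> i - 1)) m x)"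
  by (rule ext) (simp add: pdiff_def DERIV_imp_deriv[OF mono_deriv[OF assms]])

lemma deg_dec:
  fixes \<alpha> :: "'n::finite \<Rightarrow> nat"
  assumes "i \<noteq> m" "\<alpha> i \<ge> 1"
  shows "deg_wo (\<alpha>(i:=\<alpha> i - 1)) m + 1 = deg_wo \<alpha> m"
proof -
  have a: "deg_wo \<alpha> m = \<alpha> i + (\<Sum>j\<in>UNIV - {m} - {i}. \<alpha> j)"
    unfolding deg_wo_def using assms by (subst sum.remove[of _ i]) auto
  have b: "deg_wo (\<alpha>(i:=\<alpha> i - 1)) m = (\<alpha> i - 1) + (\<Sum>j\<in>UNIV - {m} - {i}. (\<alpha>(i:=\<alpha> i - 1)) j)"
    unfolding deg_wo_def using assms by (subst sum.remove[of _ i]) auto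
  have c: "(\<Sum>j\<in>UNIV - {m} - {i}. (\<alpha>(i:=\<alpha> i - 1)) j) = (\<Sum>j\<in>UNIV - {m} - {i}. \<alpha> j)"
    by (rule sum.cong) auto
  show ?thesis using a b c assms by simp
qed

lemma deg0:
  fixes \<alpha> :: "'n::finite \<Rightarrow> nat"
  assumes "deg_wo \<alpha> m = 0" "i \<noteq> m"
  shows "\<alpha> i = 0"
  using assms unfolding deg_wo_def by simp

inductive pol :: "'n \<Rightarrow> nat \<Rightarrow> (real ^ 'n \<Rightarrow> real) \<Rightarrow> bool" for m d where
  pol_mono: "deg_wo \<alpha> m \<le> d \<Longrightarrow> pol m d (mono_wo \<alpha> m)"
| pol_zero: "pol m d (\<lambda>x. 0)"
| pol_add: "pol m d P \<Longrightarrow> pol m d Q \<Longrightarrow> pol m d (\<lambda>x. P x + Q x)"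
| pol_smult: "pol m d P \<Longrightarrow> pol m d (\<lambda>x. c * P x)"

lemma pol_indep: "pol m d P \<Longrightarrow> P (vupd x m t) = P x"
  by (induction rule: pol.induct) auto

lemma pol_deriv: "pol m d P \<Longrightarrow> i \<noteq> m \<Longrightarrow>
   ((\<lambda>t. P (vupd x i t)) has_real_derivative pdiff i P x) (at (x$i))"
proof (induction rule: pol.induct)
  case (pol_mono \<alpha>)
  then show ?case using mono_deriv[of i m \<alpha> x] by (simp add: pdiff_mono)
next
  case pol_zero
  then show ?case by (simp add: pdiff_def)
next
  case (pol_add P Q)
  have d: "((\<lambda>t. P (vupd x i t) + Q (vupd x i t)) has_real_derivative pdiff i P x + pdiff i Q x) (at (x$i))"
    using pol_add by (intro DERIV_add) auto
  then have "pdiff i (\<lambda>x. P x + Q x) x = pdiff i P x + pdiff i Q x"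
    unfolding pdiff_def by (rule DERIV_imp_deriv)
  then show ?case using d by simp
next
  case (pol_smult P c)
  have d: "((\<lambda>t. c * P (vupd x i t)) has_real_derivative c * pdiff i P x) (at (x$i))"
    using pol_smult by (intro DERIV_cmult) auto
  then have "pdiff i (\<lambda>x. c * P x) x = c * pdiff i P x"
    unfolding pdiff_def by (rule DERIV_imp_deriv)
  then show ?case using d by simp
qed

lemma pdiff_add: "pol m d P \<Longrightarrow> pol m d Q \<Longrightarrow> i \<noteq> m \<Longrightarrow>
   pdiff i (\<lambda>x. P x + Q x) = (\<lambda>x. pdiff i P x + pdiff i Q x)"
proof (rule ext)
  fix x assume a: "pol m d P" "pol m d Q" "i \<noteq> m"
  have d: "((\<lambda>t. P (vupd x i t) + Q (vupd x i t)) has_real_derivative pdiff i P x + pdiff i Q x) (at (x$i))"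
    using a by (intro DERIV_add pol_deriv) auto
  then show "pdiff i (\<lambda>x. P x + Q x) x = pdiff i P x + pdiff i Q x"
    unfolding pdiff_def by (rule DERIV_imp_deriv)
qed

lemma pdiff_smult: "pol m d P \<Longrightarrow> i \<noteq> m \<Longrightarrow>
   pdiff i (\<lambda>x. c * P x) = (\<lambda>x. c * pdiff i P x)"
proof (rule ext)
  fix x assume a: "pol m d P" "i \<noteq> m"
  have d: "((\<lambda>t. c * P (vupd x i t)) has_real_derivative c * pdiff i P x) (at (x$i))"
    using a by (intro DERIV_cmult pol_deriv) auto
  then show "pdiff i (\<lambda>x. c * P x) x = c * pdiff i P x"
    unfolding pdiff_def by (rule DERIV_imp_deriv)
qed

lemma pdiff_zero: "pdiff i (\<lambda>x. 0) = (\<lambda>x. 0)"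
  by (rule ext) (simp add: pdiff_def)

lemma pol_pdiff: "pol m d P \<Longrightarrow> i \<noteq> m \<Longrightarrow>
   pol m (d - 1) (pdiff i P) \<and> (d = 0 \<longrightarrow> pdiff i P = (\<lambda>x. 0))"
proof (induction rule: pol.induct)
  case (pol_mono \<alpha>)
  show ?case
  proof (cases "\<alpha> i = 0")
    case True
    then show ?thesis using pol_mono by (simp add: pdiff_mono pol.pol_zero)
  next
    case False
    have "deg_wo (\<alpha>(i:=\<alpha> i - 1)) m \<le> d - 1" using deg_dec[of i m \<alpha>] False pol_mono by auto
    then have "pol m (d - 1) (\<lambda>x. real (\<alpha> i) * mono_wo (\<alpha>(i:=\<alpha> i - 1)) m x)"
      by (intro pol.pol_smult pol.pol_mono)
    moreover have "d \<noteq> 0" using deg0[of \<alpha> m i] False pol_mono by (metis le_zero_eq)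
    ultimately show ?thesis using pol_mono by (simp add: pdiff_mono)
  qed
next
  case pol_zero
  then show ?case by (simp add: pdiff_zero pol.pol_zero)
next
  case (pol_add P Q)
  then show ?case by (simp add: pdiff_add[OF pol_add(1,2,5)] pol.pol_add)
next
  case (pol_smult P c)
  then show ?case by (simp add: pdiff_smult[OF pol_smult(1,3)] pol.pol_smult)
qed

lemma pol_sum: "finite S \<Longrightarrow> (\<And>s. s \<in> S \<Longrightarrow> pol m d (g s)) \<Longrightarrow> pol m d (\<lambda>x. \<Sum>s\<in>S. g s x)"
proof (induction rule: finite_induct)
  case empty
  then show ?case by (simp add: pol.pol_zero)
next
  case (insert a F)
  then show ?case by (simp add: pol.pol_add)
qed

lemma glap_wo_eq: "glap_wo \<omega> m P = (\<lambda>x. \<Sum>i\<in>UNIV - {m}. \<omega> i * pdiff i (pdiff i P) x)"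
  by (rule ext) (simp add: glap_wo_def)

lemma pol_L: "pol m d P \<Longrightarrow> pol m (d - 2) (glap_wo \<omega> m P) \<and> (d \<le> 1 \<longrightarrow> glap_wo \<omega> m P = (\<lambda>x. 0))"
proof -
  assume P: "pol m d P"
  have a: "pol m (d - 2) (\<lambda>x. \<omega> i * pdiff i (pdiff i P) x)" if "i \<in> UNIV - {m}" for i
  proof -
    have i: "i \<noteq> m" using that by simp
    have "pol m (d - 1) (pdiff i P)" using pol_pdiff[OF P i] by (rule conjunct1)
    then have "pol m (d - 1 - 1) (pdiff i (pdiff i P))" by (rule pol_pdiff[OF _ i, THEN conjunct1])
    moreover have "d - 1 - 1 = d - 2" by arith
    ultimately have "pol m (d - 2) (pdiff i (pdiff i P))" by simp
    then show ?thesis by (rule pol.pol_smult)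
  qed
  have b: "pdiff i (pdiff i P) = (\<lambda>x. 0)" if "i \<in> UNIV - {m}" "d \<le> 1" for i
  proof -
    have i: "i \<noteq> m" using that by simp
    have p1: "pol m (d - 1) (pdiff i P)" using pol_pdiff[OF P i] by (rule conjunct1)
    have "d - 1 = 0" using that(2) by simp
    then show ?thesis using pol_pdiff[OF p1 i] by simp
  qed
  show ?thesis
  proof
    show "pol m (d - 2) (glap_wo \<omega> m P)" unfolding glap_wo_eq
      by (rule pol_sum) (simp, rule a)
    show "d \<le> 1 \<longrightarrow> glap_wo \<omega> m P = (\<lambda>x. 0)"
    proof
      assume d1: "d \<le> 1"
      show "glap_wo \<omega> m P = (\<lambda>x. 0)" unfolding glap_wo_eq
      proof (rule ext, rule sum.neutral, rule ballI)
        fix x i assume "i \<in> UNIV - {m}"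
        then show "\<omega> i * pdiff i (pdiff i P) x = 0" using b[OF _ d1] by simp
      qed
    qed
  qed
qed

lemma pol_Lpow: "pol m d M \<Longrightarrow> pol m (d - 2 * p) ((glap_wo \<omega> m ^^ p) M)"
proof (induction p)
  case 0
  then show ?case by simp
next
  case (Suc p)
  then have "pol m (d - 2 * p - 2) (glap_wo \<omega> m ((glap_wo \<omega> m ^^ p) M))" using pol_L[of m "d - 2 * p" "(glap_wo \<omega> m ^^ p) M" \<omega>] by simp
  then show ?case by (simp add: diff_diff_add)
qed

lemma pdiff_i_sum:
  assumes S: "finite S" and M: "\<And>p. p \<in> S \<Longrightarrow> pol m (d p) (M p)" and i: "i \<noteq> m"
  shows "pdiff i (\<lambda>x. \<Sum>p\<in>S. M p x * h p (x$m)) = (\<lambda>x. \<Sum>p\<in>S. pdiff i (M p) x * h p (x$m))"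
proof (rule ext)
  fix x
  have e: "(\<lambda>t. \<Sum>p\<in>S. M p (vupd x i t) * h p (vupd x i t $ m)) = (\<lambda>t. \<Sum>p\<in>S. M p (vupd x i t) * h p (x $ m))"
    using i by auto
  have "((\<lambda>t. \<Sum>p\<in>S. M p (vupd x i t) * h p (x $ m)) has_real_derivative (\<Sum>p\<in>S. pdiff i (M p) x * h p (x$m))) (at (x$i))"
    by (intro DERIV_sum DERIV_cmult_right pol_deriv[OF M i])
  then show "pdiff i (\<lambda>x. \<Sum>p\<in>S. M p x * h p (x$m)) x = (\<Sum>p\<in>S. pdiff i (M p) x * h p (x$m))"
    unfolding pdiff_def e by (rule DERIV_imp_deriv)
qed

lemma pdiff_i_prod:
  assumes M: "pol m d M" and i: "i \<noteq> m"
  shows "pdiff i (\<lambda>x. M x * h (x$m)) = (\<lambda>x. pdiff i M x * h (x$m))"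
proof (rule ext)
  fix x
  have e: "(\<lambda>t. M (vupd x i t) * h (vupd x i t $ m)) = (\<lambda>t. M (vupd x i t) * h (x $ m))"
    using i by auto
  have "((\<lambda>t. M (vupd x i t) * h (x $ m)) has_real_derivative (pdiff i M x * h (x$m))) (at (x$i))"
    by (intro DERIV_cmult_right pol_deriv[OF M i])
  then show "pdiff i (\<lambda>x. M x * h (x$m)) x = pdiff i M x * h (x$m)"
    unfolding pdiff_def e by (rule DERIV_imp_deriv)
qed

lemma pdiff_m_sum:
  assumes M: "\<And>p x t. p \<in> S \<Longrightarrow> M p (vupd x m t) = M p x"
    and h: "\<And>p t. p \<in> S \<Longrightarrow> (h p has_real_derivative h' p t) (at t)"
  shows "pdiff m (\<lambda>x. \<Sum>p\<in>S. M p x * h p (x$m)) = (\<lambda>x. \<Sum>p\<in>S. M p x * h' p (x$m))"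
proof (rule ext)
  fix x
  have e: "(\<lambda>t. \<Sum>p\<in>S. M p (vupd x m t) * h p (vupd x m t $ m)) = (\<lambda>t. \<Sum>p\<in>S. M p x * h p t)"
    using M by auto
  have "((\<lambda>t. \<Sum>p\<in>S. M p x * h p t) has_real_derivative (\<Sum>p\<in>S. M p x * h' p (x$m))) (at (x$m))"
    by (intro DERIV_sum DERIV_cmult h)
  then show "pdiff m (\<lambda>x. \<Sum>p\<in>S. M p x * h p (x$m)) x = (\<Sum>p\<in>S. M p x * h' p (x$m))"
    unfolding pdiff_def e by (rule DERIV_imp_deriv)
qed

lemma pdiff_m_prod:
  assumes M: "\<And>x t. M (vupd x m t) = M x"
    and h: "\<And>t. (h has_real_derivative h' t) (at t)"
  shows "pdiff m (\<lambda>x. M x * h (x$m)) = (\<lambda>x. M x * h' (x$m))"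
proof (rule ext)
  fix x
  have e: "(\<lambda>t. M (vupd x m t) * h (vupd x m t $ m)) = (\<lambda>t. M x * h t)"
    using M by auto
  have "((\<lambda>t. M x * h t) has_real_derivative (M x * h' (x$m))) (at (x$m))"
    by (intro DERIV_cmult h)
  then show "pdiff m (\<lambda>x. M x * h (x$m)) x = M x * h' (x$m)"
    unfolding pdiff_def e by (rule DERIV_imp_deriv)
qed

lemma glap_sum:
  fixes M :: "'a \<Rightarrow> real ^ 'n \<Rightarrow> real"
  assumes S: "finite S" and M: "\<And>p. p \<in> S \<Longrightarrow> pol m (d p) (M p)"
    and hd1: "\<And>p t. p \<in> S \<Longrightarrow> (h p has_real_derivative ha p t) (at t)"
    and hd2: "\<And>p t. p \<in> S \<Longrightarrow> (ha p has_real_derivative hb p t) (at t)"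
  shows "glap \<omega> (\<lambda>x. \<Sum>p\<in>S. M p x * h p (x$m)) x
       = (\<Sum>p\<in>S. \<omega> m * (M p x * hb p (x$m)) + glap_wo \<omega> m (M p) x * h p (x$m))"
proof -
  let ?G = "\<lambda>x. \<Sum>p\<in>S. M p x * h p (x$m)"
  have Mi: "\<And>p x t. p \<in> S \<Longrightarrow> M p (vupd x m t) = M p x" by (rule pol_indep[OF M])
  have A: "pdiff m (pdiff m ?G) = (\<lambda>x. \<Sum>p\<in>S. M p x * hb p (x$m))"
  proof -
    have A1: "pdiff m ?G = (\<lambda>x. \<Sum>p\<in>S. M p x * ha p (x$m))"
      by (rule pdiff_m_sum[of S M m h ha, OF Mi hd1])
    show ?thesis unfolding A1 by (rule pdiff_m_sum[of S M m ha hb, OF Mi hd2])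
  qed
  have B: "pdiff i (pdiff i ?G) = (\<lambda>x. \<Sum>p\<in>S. pdiff i (pdiff i (M p)) x * h p (x$m))" if i: "i \<noteq> m" for i
  proof -
    have M': "pol m (d p - 1) (pdiff i (M p))" if "p \<in> S" for p using pol_pdiff[OF M[OF that] i] by (rule conjunct1)
    have B1: "pdiff i ?G = (\<lambda>x. \<Sum>p\<in>S. pdiff i (M p) x * h p (x$m))"
      by (rule pdiff_i_sum[of S m d M i h, OF S M i])
    show ?thesis unfolding B1 by (rule pdiff_i_sum[of S m "\<lambda>p. d p - 1" "\<lambda>p. pdiff i (M p)" i h, OF S M' i])
  qed
  have C: "pdiff m (pdiff m ?G) x = (\<Sum>p\<in>S. M p x * hb p (x$m))" using A by (rule fun_cong)
  have F: "glap \<omega> ?G x = \<omega> m * pdiff m (pdiff m ?G) x + (\<Sum>i\<in>UNIV - {m}. \<omega> i * pdiff i (pdiff i ?G) x)"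
    unfolding glap_def by (subst sum.remove[of _ m]) auto
  have "(\<Sum>i\<in>UNIV - {m}. \<omega> i * pdiff i (pdiff i ?G) x)
      = (\<Sum>i\<in>UNIV - {m}. \<Sum>p\<in>S. \<omega> i * pdiff i (pdiff i (M p)) x * h p (x$m))"
    by (rule sum.cong) (auto simp: B sum_distrib_left mult.assoc)
  also have "\<dots> = (\<Sum>p\<in>S. \<Sum>i\<in>UNIV - {m}. \<omega> i * pdiff i (pdiff i (M p)) x * h p (x$m))"
    by (rule sum.swap)
  also have "\<dots> = (\<Sum>p\<in>S. glap_wo \<omega> m (M p) x * h p (x$m))"
    by (rule sum.cong[OF refl]) (simp only: glap_wo_def sum_distrib_right)
  finally have E: "(\<Sum>i\<in>UNIV - {m}. \<omega> i * pdiff i (pdiff i ?G) x) = (\<Sum>p\<in>S. glap_wo \<omega> m (M p) x * h p (x$m))" .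
  have D: "\<omega> m * pdiff m (pdiff m ?G) x = (\<Sum>p\<in>S. \<omega> m * (M p x * hb p (x$m)))"
    unfolding C by (rule sum_distrib_left)
  have "glap \<omega> ?G x = (\<Sum>p\<in>S. \<omega> m * (M p x * hb p (x$m))) + (\<Sum>p\<in>S. glap_wo \<omega> m (M p) x * h p (x$m))"
    unfolding F D E ..
  also have "\<dots> = (\<Sum>p\<in>S. \<omega> m * (M p x * hb p (x$m)) + glap_wo \<omega> m (M p) x * h p (x$m))"
    by (rule sum.distrib[symmetric])
  finally show ?thesis .
qed

lemma L_prod:
  assumes M: "pol m d M"
  shows "glap_wo \<omega> m (\<lambda>x. M x * h (x$m)) = (\<lambda>x. glap_wo \<omega> m M x * h (x$m))"
proof (rule ext)
  fix x
  have "pdiff i (pdiff i (\<lambda>x. M x * h (x$m))) = (\<lambda>x. pdiff i (pdiff i M) x * h (x$m))" if i: "i \<noteq> m" for i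
  proof -
    have M': "pol m (d - 1) (pdiff i M)" using pol_pdiff[OF M i] by (rule conjunct1)
    show ?thesis unfolding pdiff_i_prod[OF M i] by (rule pdiff_i_prod[OF M' i])
  qed
  then show "glap_wo \<omega> m (\<lambda>x. M x * h (x$m)) x = glap_wo \<omega> m M x * h (x$m)"
    unfolding glap_wo_def sum_distrib_right by (intro sum.cong) auto
qed

lemma Lpow_prod:
  assumes M: "pol m d M"
  shows "(glap_wo \<omega> m ^^ p) (\<lambda>x. M x * h (x$m)) = (\<lambda>x. (glap_wo \<omega> m ^^ p) M x * h (x$m))"
proof (induction p)
  case 0
  then show ?case by simp
next
  case (Suc p)
  show ?case using L_prod[OF pol_Lpow[OF M, of p \<omega>]] Suc by simp
qed

lemma antideriv_prod:
  assumes M: "\<And>x t. M (vupd x m t) = M x"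
  shows "antideriv m x0 (\<lambda>x. M x * h (x$m)) = (\<lambda>x. M x * antideriv1 x0 h (x$m))"
  by (rule ext) (simp add: antideriv_def antideriv1_def oint_def M)

lemma antideriv_pow:
  assumes M: "\<And>x t. M (vupd x m t) = M x"
  shows "(antideriv m x0 ^^ j) (\<lambda>x. M x * h (x$m)) = (\<lambda>x. M x * (antideriv1 x0 ^^ j) h (x$m))"
  by (induction j) (simp_all add: antideriv_prod[OF M])

lemma antideriv1_eq: "antideriv1 x0 g = (\<lambda>t. oint x0 t g)"
  by (rule ext) (simp add: antideriv1_def)

lemma F_props:
  assumes f: "continuous_on UNIV f"
  shows "continuous_on UNIV ((antideriv1 x0 ^^ j) f) \<and>
     (\<forall>t. ((antideriv1 x0 ^^ Suc j) f has_real_derivative (antideriv1 x0 ^^ j) f t) (at t))"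
proof (induction j)
  case 0
  have "((antideriv1 x0 f) has_real_derivative f t) (at t)" for t
    unfolding antideriv1_eq[of x0 f] by (rule oint_deriv[OF f])
  then show ?case using f by simp
next
  case (Suc j)
  let ?F = "(antideriv1 x0 ^^ Suc j) f"
  have c: "continuous_on UNIV ?F"
    using Suc by (intro continuous_at_imp_continuous_on) (auto intro: DERIV_isCont)
  have "((antideriv1 x0 ?F) has_real_derivative ?F t) (at t)" for t
    unfolding antideriv1_eq[of x0 ?F] by (rule oint_deriv[OF c])
  then show ?case using c by simp
qed

lemma pdiff_pow:
  assumes M: "\<And>x t. M (vupd x m t) = M x"
    and Fd: "\<And>j t. (F (Suc j) has_real_derivative F j t) (at t)"
  shows "(pdiff m ^^ r) (\<lambda>x. M x * (c * F (r + j) (x$m))) = (\<lambda>x. M x * (c * F j (x$m)))"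
proof (induction r arbitrary: j)
  case 0
  then show ?case by simp
next
  case (Suc r)
  have "(pdiff m ^^ r) (\<lambda>x. M x * (c * F (r + Suc j) (x$m))) = (\<lambda>x. M x * (c * F (Suc j) (x$m)))"
    by (rule Suc)
  moreover have "pdiff m (\<lambda>x. M x * (c * F (Suc j) (x$m))) = (\<lambda>x. M x * (c * F j (x$m)))"
    using pdiff_m_prod[of M m "\<lambda>t. c * F (Suc j) t" "\<lambda>t. c * F j t"] M Fd
    by (simp add: DERIV_cmult)
  ultimately show ?case by simp
qed

lemma pw_step: "(w::real) \<noteq> 0 \<Longrightarrow> w * w powi (- int (Suc n)) = w powi (- int n)"
proof -
  assume w: "w \<noteq> 0"
  have a: "w powi (- int (Suc n)) = inverse (w ^ Suc n)" by (simp only: power_int_minus power_int_of_nat)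
  have b: "w powi (- int n) = inverse (w ^ n)" by (simp only: power_int_minus power_int_of_nat)
  show ?thesis unfolding a b using w by (simp add: field_simps)
qed

lemma coef_rec:
  fixes w :: real
  assumes w: "w \<noteq> 0"
  shows "w * ((-1)^p * real ((Suc j + p - 1) choose p) * w powi (- int (p + Suc j)))
     + (if p = 0 then 0 else (-1)^(p-1) * real ((Suc j + (p-1) - 1) choose (p-1)) * w powi (- int ((p-1) + Suc j)))
     = (-1)^p * real ((j + p - 1) choose p) * w powi (- int (p + j))"
proof (cases p)
  case 0
  then show ?thesis using pw_step[OF w, of j] by simp
next
  case (Suc p')
  define E where "E = w powi (- int (Suc p' + j))"
  have e1: "w * w powi (- int (Suc p' + Suc j)) = E"
    unfolding E_def using pw_step[OF w, of "Suc p' + j"] by simp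
  have e2: "w powi (- int (p' + Suc j)) = E" unfolding E_def by simp
  have c: "real (Suc (j + p') choose Suc p') = real (j + p' choose p') + real (j + p' choose Suc p')"
    by simp
  have "w * ((-1)^p * real ((Suc j + p - 1) choose p) * w powi (- int (p + Suc j)))
      = (-1)^Suc p' * real (Suc (j + p') choose Suc p') * (w * w powi (- int (Suc p' + Suc j)))"
    using Suc by (simp add: algebra_simps)
  also have "\<dots> = (-1)^Suc p' * (real (j + p' choose p') + real (j + p' choose Suc p')) * E"
    unfolding e1 c ..
  finally have l: "w * ((-1)^p * real ((Suc j + p - 1) choose p) * w powi (- int (p + Suc j)))
      = (-1)^Suc p' * (real (j + p' choose p') + real (j + p' choose Suc p')) * E" .
  have r: "(if p = 0 then 0 else (-1)^(p-1) * real ((Suc j + (p-1) - 1) choose (p-1)) * w powi (- int ((p-1) + Suc j)))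
      = (-1)^p' * real (j + p' choose p') * E"
    using Suc e2 by simp
  have rhs: "(-1)^p * real ((j + p - 1) choose p) * w powi (- int (p + j)) = (-1)^Suc p' * real (j + p' choose Suc p') * E"
    using Suc E_def by simp
  show ?thesis unfolding l r rhs by (simp add: algebra_simps)
qed

theorem corollary5p1:
  fixes \<omega> :: "'n::finite \<Rightarrow> real" and k :: nat
    and q :: "real ^ 'n \<Rightarrow> real" and f :: "real \<Rightarrow> real"
    and m :: 'n and \<beta> :: "'n \<Rightarrow> nat" and x0 :: real
    and lam :: nat and W Q :: "real ^ 'n \<Rightarrow> real"
  assumes \<omega>_nz: "\<And>i. \<omega> i \<noteq> 0"
    and q_C1: "\<exists>D :: real ^ 'n \<Rightarrow> ((real ^ 'n) \<Rightarrow>\<^sub>L real).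
                 (\<forall>x. (q has_derivative blinfun_apply (D x)) (at x)) \<and> continuous_on UNIV D"
    and q_form: "\<And>x. q x = f (x $ m) * mono_wo \<beta> m x"
    and lam_def: "lam = nat \<lceil>(real (deg_wo \<beta> m) - 1) / 2\<rceil>"
    and W_def: "W = (\<lambda>x. \<omega> m powi (- int (lam + k)) * (antideriv m x0 ^^ (2*lam + 2*k)) q x)"
    and Q_def: "Q = (\<lambda>x. \<Sum>p = 0..lam. (-1) ^ p * real ((k + p - 1) choose p) * \<omega> m ^ (lam - p)
                     * ((pdiff m ^^ (2*lam - 2*p)) ((glap_wo \<omega> m ^^ p) W)) x)"
  shows "(\<forall>x. W x = \<omega> m powi (- int (lam + k)) * mono_wo \<beta> m x
                     * (antideriv1 x0 ^^ (2*lam + 2*k)) f (x $ m))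
       \<and> (\<forall>x. Q x = (\<Sum>p = 0..lam. (-1) ^ p * real ((k + p - 1) choose p) * \<omega> m powi (- int (p + k))
                     * (antideriv m x0 ^^ (2*k + 2*p)) ((glap_wo \<omega> m ^^ p) q) x))
       \<and> (\<forall>x. (glap \<omega> ^^ k) Q x = q x)"
proof -
  define b where "b = deg_wo \<beta> m"
  define Mp where "Mp = (\<lambda>p. (glap_wo \<omega> m ^^ p) (mono_wo \<beta> m))"
  define F where "F = (\<lambda>j. (antideriv1 x0 ^^ j) f)"
  define c0 where "c0 = \<omega> m powi (- int (lam + k))"
  define cf where "cf = (\<lambda>j p. (-1)^p * real ((j + p - 1) choose p) * \<omega> m powi (- int (p + j)))"
  define T where "T = (\<lambda>j x. \<Sum>p = 0..lam. Mp p x * (cf j p * F (2*j + 2*p) (x$m)))"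
  define one :: "real ^ 'n" where "one = (\<chi> i. 1)"
  have wm: "\<omega> m \<noteq> 0" by (rule \<omega>_nz)
  obtain D :: "real ^ 'n \<Rightarrow> ((real ^ 'n) \<Rightarrow>\<^sub>L real)" where D: "\<And>x. (q has_derivative blinfun_apply (D x)) (at x)"
    using q_C1 by blast
  have qc: "continuous_on UNIV q"
  proof (rule continuous_at_imp_continuous_on, rule ballI)
    fix x show "isCont q x" using D[of x] by (rule has_derivative_continuous)
  qed
  have mono1: "mono_wo \<beta> m one = 1"
    by (simp add: mono_wo_def one_def)
  have feq: "f = (\<lambda>t. q (vupd one m t))"
    by (rule ext) (simp add: q_form mono1)
  have vc: "continuous_on UNIV (\<lambda>t. vupd one m t)"
  proof -
    have "continuous_on UNIV (\<lambda>x. if i = m then x else one $ i)" for i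
      by (cases "i = m") (simp_all add: continuous_on_id continuous_on_const)
    then show ?thesis unfolding vupd_def by (intro continuous_on_vec_lambda)
  qed
  have fc: "continuous_on UNIV f"
    unfolding feq by (rule continuous_on_compose2[OF qc vc]) auto
  have FP: "continuous_on UNIV ((antideriv1 x0 ^^ j) f) \<and> (\<forall>t. ((antideriv1 x0 ^^ Suc j) f has_real_derivative (antideriv1 x0 ^^ j) f t) (at t))" for j
    by (rule F_props[OF fc])
  have Fd0: "((antideriv1 x0 ^^ Suc j) f has_real_derivative (antideriv1 x0 ^^ j) f t) (at t)" for j t
    using conjunct2[OF FP[of j]] by (rule spec)
  have Fd: "\<And>j t. (F (Suc j) has_real_derivative F j t) (at t)"
    unfolding F_def by (rule Fd0)
  have F0: "F 0 = f" by (simp add: F_def)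
  have polm: "pol m b (mono_wo \<beta> m)" unfolding b_def by (rule pol_mono) simp
  have polM: "pol m (b - 2 * p) (Mp p)" for p
    unfolding Mp_def by (rule pol_Lpow[OF polm])
  have Mind: "Mp p (vupd x m t) = Mp p x" for p x t using pol_indep[OF polM] .
  have MSuc: "Mp (Suc p) = glap_wo \<omega> m (Mp p)" for p by (simp add: Mp_def)
  have blam: "b - 2 * lam \<le> 1"
  proof -
    have "(real b - 1) / 2 \<le> real_of_int \<lceil>(real b - 1) / 2\<rceil>" by (rule le_of_int_ceiling)
    also have "\<dots> \<le> real lam" unfolding lam_def b_def[symmetric] by linarith
    finally have "real b \<le> real (2 * lam + 1)" by simp
    then have "b \<le> 2 * lam + 1" by (simp only: of_nat_le_iff)
    then show ?thesis by simp
  qed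
  have Mlam: "Mp (Suc lam) = (\<lambda>x. 0)"
  proof -
    have "b - 2 * lam \<le> 1 \<longrightarrow> glap_wo \<omega> m (Mp lam) = (\<lambda>x. 0)"
      using pol_L[OF polM[of lam]] by (rule conjunct2)
    then show ?thesis unfolding MSuc using blam by (rule mp)
  qed
  have qeq: "q = (\<lambda>x. mono_wo \<beta> m x * f (x$m))"
    by (rule ext) (simp add: q_form mult.commute)
  have Aq: "(antideriv m x0 ^^ j) q = (\<lambda>x. mono_wo \<beta> m x * F j (x$m))" for j
    unfolding qeq F_def by (rule antideriv_pow) simp
  have C1: "W x = c0 * mono_wo \<beta> m x * F (2*lam + 2*k) (x$m)" for x
    unfolding W_def c0_def Aq by simp
  have Weq: "W = (\<lambda>x. mono_wo \<beta> m x * (c0 * F (2*lam + 2*k) (x$m)))"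
    by (rule ext) (simp add: C1)
  have LW: "(glap_wo \<omega> m ^^ p) W = (\<lambda>x. Mp p x * (c0 * F (2*lam + 2*k) (x$m)))" for p
    unfolding Weq Mp_def by (rule Lpow_prod[OF polm, where h="\<lambda>t. c0 * F (2*lam + 2*k) t"])
  have Lq: "(glap_wo \<omega> m ^^ p) q = (\<lambda>x. Mp p x * f (x$m))" for p
    unfolding qeq Mp_def by (rule Lpow_prod[OF polm, where h=f])
  have ALq: "(antideriv m x0 ^^ j) ((glap_wo \<omega> m ^^ p) q) = (\<lambda>x. Mp p x * F j (x$m))" for p j
    unfolding Lq F_def by (rule antideriv_pow[where M="Mp p" and h=f]) (rule Mind)
  have PLW: "(pdiff m ^^ (2*lam - 2*p)) ((glap_wo \<omega> m ^^ p) W) = (\<lambda>x. Mp p x * (c0 * F (2*k + 2*p) (x$m)))"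
    if "p \<le> lam" for p
  proof -
    have e: "2*lam + 2*k = (2*lam - 2*p) + (2*k + 2*p)" using that by simp
    have "(pdiff m ^^ (2*lam - 2*p)) (\<lambda>x. Mp p x * (c0 * F ((2*lam - 2*p) + (2*k + 2*p)) (x$m)))
        = (\<lambda>x. Mp p x * (c0 * F (2*k+2*p) (x$m)))" by (rule pdiff_pow[where M="Mp p" and m=m and F=F, OF Mind Fd])
    then show ?thesis unfolding LW e .
  qed
  have pw: "\<omega> m ^ (lam - p) * c0 = \<omega> m powi (- int (p + k))" if "p \<le> lam" for p
  proof -
    have "\<omega> m ^ (lam - p) * c0 = \<omega> m powi (int (lam - p) + (- int (lam + k)))"
      unfolding c0_def by (simp only: power_int_add[OF disjI1[OF wm]] power_int_of_nat)
    also have "int (lam - p) + (- int (lam + k)) = - int (p + k)" using that by simp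
    finally show ?thesis .
  qed
  have C2: "Q x = (\<Sum>p = 0..lam. (-1) ^ p * real ((k + p - 1) choose p) * \<omega> m powi (- int (p + k))
                     * (antideriv m x0 ^^ (2*k + 2*p)) ((glap_wo \<omega> m ^^ p) q) x)" for x
    unfolding Q_def ALq
  proof (rule sum.cong[OF refl])
    fix p assume "p \<in> {0..lam}"
    then have p: "p \<le> lam" by simp
    show "(-1) ^ p * real ((k + p - 1) choose p) * \<omega> m ^ (lam - p) * ((pdiff m ^^ (2*lam - 2*p)) ((glap_wo \<omega> m ^^ p) W)) x
       = (-1) ^ p * real ((k + p - 1) choose p) * \<omega> m powi (- int (p + k)) * (Mp p x * F (2*k + 2*p) (x$m))"
    proof -
      have X: "((pdiff m ^^ (2*lam - 2*p)) ((glap_wo \<omega> m ^^ p) W)) x = Mp p x * (c0 * F (2*k + 2*p) (x$m))"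
        unfolding PLW[OF p] ..
      have "(-1) ^ p * real ((k + p - 1) choose p) * \<omega> m ^ (lam - p) * ((pdiff m ^^ (2*lam - 2*p)) ((glap_wo \<omega> m ^^ p) W)) x
         = (-1) ^ p * real ((k + p - 1) choose p) * (\<omega> m ^ (lam - p) * c0) * (Mp p x * F (2*k + 2*p) (x$m))"
        unfolding X by (simp only: mult_ac)
      also have "\<dots> = (-1) ^ p * real ((k + p - 1) choose p) * \<omega> m powi (- int (p + k)) * (Mp p x * F (2*k + 2*p) (x$m))"
        unfolding pw[OF p] ..
      finally show ?thesis .
    qed
  qed
  have QT: "Q = T k"
  proof (rule ext)
    fix x show "Q x = T k x" unfolding C2 ALq T_def cf_def
      by (rule sum.cong[OF refl]) (simp add: mult_ac)
  qed
  have step: "glap \<omega> (T (Suc j)) = T j" for j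
  proof (rule ext)
    fix x
    have "glap \<omega> (T (Suc j)) x = (\<Sum>p = 0..lam. \<omega> m * (Mp p x * (cf (Suc j) p * F (2*j + 2*p) (x$m)))
        + glap_wo \<omega> m (Mp p) x * (cf (Suc j) p * F (2 * Suc j + 2*p) (x$m)))"
      unfolding T_def
    proof (rule glap_sum[where d="\<lambda>p. b - 2*p" and ha="\<lambda>p t. cf (Suc j) p * F (Suc (2*j + 2*p)) t"
        and h="\<lambda>p t. cf (Suc j) p * F (2 * Suc j + 2 * p) t" and hb="\<lambda>p t. cf (Suc j) p * F (2*j + 2*p) t"
        and M=Mp and S="{0..lam}" and m=m and \<omega>=\<omega> and x=x])
      show "finite {0..lam}" by simp
      show "pol m (b - 2*p) (Mp p)" for p by (rule polM)
      show "((\<lambda>t. cf (Suc j) p * F (2 * Suc j + 2 * p) t) has_real_derivative cf (Suc j) p * F (Suc (2*j + 2*p)) t) (at t)" for p t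
      proof -
        have "2 * Suc j + 2 * p = Suc (Suc (2*j + 2*p))" by simp
        then show ?thesis using Fd by (simp add: DERIV_cmult)
      qed
      show "((\<lambda>t. cf (Suc j) p * F (Suc (2*j + 2*p)) t) has_real_derivative cf (Suc j) p * F (2*j + 2*p) t) (at t)" for p t
        using Fd by (simp add: DERIV_cmult)
    qed
    also have "\<dots> = (\<Sum>p = 0..lam. \<omega> m * (Mp p x * (cf (Suc j) p * F (2*j + 2*p) (x$m))))
        + (\<Sum>p = 0..lam. Mp (Suc p) x * (cf (Suc j) p * F (2 * Suc j + 2 * p) (x$m)))"
      unfolding MSuc[symmetric] by (rule sum.distrib)
    also have "(\<Sum>p = 0..lam. Mp (Suc p) x * (cf (Suc j) p * F (2 * Suc j + 2 * p) (x$m)))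
        = (\<Sum>p = 0..lam. (if p = 0 then 0 else Mp p x * (cf (Suc j) (p - 1) * F (2 * j + 2 * p) (x$m))))"
    proof -
      let ?B = "\<lambda>p. (if p = 0 then 0 else Mp p x * (cf (Suc j) (p - 1) * F (2 * j + 2 * p) (x$m)))"
      have "(\<Sum>p = 0..Suc lam. ?B p) = ?B 0 + (\<Sum>p = 0..lam. ?B (Suc p))"
        by (rule sum.atLeast0_atMost_Suc_shift[unfolded comp_def])
      also have "\<dots> = (\<Sum>p = 0..lam. Mp (Suc p) x * (cf (Suc j) p * F (2 * Suc j + 2 * p) (x$m)))"
      proof -
        have "?B (Suc p) = Mp (Suc p) x * (cf (Suc j) p * F (2 * Suc j + 2 * p) (x$m))" for p
        proof -
          have "2 * j + 2 * Suc p = 2 * Suc j + 2 * p" by simp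
          then show ?thesis by simp
        qed
        then show ?thesis by simp
      qed
      finally have a: "(\<Sum>p = 0..Suc lam. ?B p) = (\<Sum>p = 0..lam. Mp (Suc p) x * (cf (Suc j) p * F (2 * Suc j + 2 * p) (x$m)))" .
      have z: "?B (Suc lam) = 0" using Mlam by simp
      have c: "(\<Sum>p = 0..Suc lam. ?B p) = (\<Sum>p = 0..lam. ?B p)"
        using sum.atLeast0_atMost_Suc[of ?B lam] z by (simp only: add_0_right)
      show ?thesis by (rule trans[OF a[symmetric] c])
    qed
    also have "(\<Sum>p = 0..lam. \<omega> m * (Mp p x * (cf (Suc j) p * F (2*j + 2*p) (x$m))))
        + (\<Sum>p = 0..lam. (if p = 0 then 0 else Mp p x * (cf (Suc j) (p - 1) * F (2 * j + 2 * p) (x$m))))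
        = (\<Sum>p = 0..lam. Mp p x * ((\<omega> m * cf (Suc j) p + (if p = 0 then 0 else cf (Suc j) (p - 1))) * F (2 * j + 2 * p) (x$m)))"
      unfolding sum.distrib[symmetric]
    proof (rule sum.cong[OF refl])
      fix p
      show "\<omega> m * (Mp p x * (cf (Suc j) p * F (2*j + 2*p) (x$m))) + (if p = 0 then 0 else Mp p x * (cf (Suc j) (p - 1) * F (2 * j + 2 * p) (x$m)))
        = Mp p x * ((\<omega> m * cf (Suc j) p + (if p = 0 then 0 else cf (Suc j) (p - 1))) * F (2 * j + 2 * p) (x$m))"
        by (cases "p = 0") (simp_all add: distrib_left distrib_right mult.assoc mult.left_commute)
    qed
    also have "\<dots> = T j x"
      unfolding T_def
    proof (rule sum.cong[OF refl])
      fix p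
      have "\<omega> m * cf (Suc j) p + (if p = 0 then 0 else cf (Suc j) (p - 1)) = cf j p"
        unfolding cf_def by (rule coef_rec[OF wm])
      then show "Mp p x * ((\<omega> m * cf (Suc j) p + (if p = 0 then 0 else cf (Suc j) (p - 1))) * F (2 * j + 2 * p) (x$m))
          = Mp p x * (cf j p * F (2 * j + 2 * p) (x$m))" by simp
    qed
    finally show "glap \<omega> (T (Suc j)) x = T j x" .
  qed
  have T0: "T 0 = q"
  proof (rule ext)
    fix x
    have "T 0 x = (\<Sum>p = 0..lam. (if p = 0 then q x else 0))"
      unfolding T_def
    proof (rule sum.cong[OF refl])
      fix p
      show "Mp p x * (cf 0 p * F (2 * 0 + 2 * p) (x$m)) = (if p = 0 then q x else 0)"
      proof (cases p)
        case 0
        then show ?thesis by (simp add: cf_def Mp_def F0 qeq)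
      next
        case (Suc p')
        then show ?thesis by (simp add: cf_def)
      qed
    qed
    also have "\<dots> = q x" by simp
    finally show "T 0 x = q x" .
  qed
  have all: "(glap \<omega> ^^ j) (T j) = q" for j
  proof (induction j)
    case 0
    then show ?case by (simp add: T0)
  next
    case (Suc j)
    have "(glap \<omega> ^^ Suc j) (T (Suc j)) = (glap \<omega> ^^ j) (glap \<omega> (T (Suc j)))"
      by (simp only: funpow_Suc_right o_apply)
    then show ?case using Suc step by simp
  qed
  have C3: "(glap \<omega> ^^ k) Q x = q x" for x using all[of k] QT by simp
  show ?thesis
  proof (intro conjI allI)
    fix x
    show "W x = \<omega> m powi (- int (lam + k)) * mono_wo \<beta> m x * (antideriv1 x0 ^^ (2*lam + 2*k)) f (x $ m)"
      using C1[of x] unfolding c0_def F_def .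
    show "Q x = (\<Sum>p = 0..lam. (-1) ^ p * real ((k + p - 1) choose p) * \<omega> m powi (- int (p + k))
                     * (antideriv m x0 ^^ (2*k + 2*p)) ((glap_wo \<omega> m ^^ p) q) x)" by (rule C2)
    show "(glap \<omega> ^^ k) Q x = q x" by (rule C3)
  qed
qed

end
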